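(* Let $v\equiv 1$ or $7\pmod{24}$ and $n=\frac{v-1}{6}$. If a cyclic four-fold triple system CTS$(v,4)$ has fine structure $(c_1,c_2,c_3,c_4)$ with $c_2=t$, $c_3=s$, $c_4=u$, then $0\le u\le n$, $0\le s\le n-u$ and $0\le t\le 2n-2u-2s$.
   Context: A cyclic $\lambda$-fold triple system CTS$(v,\lambda)$ is a multiset $\mathcal B$ of 3-element subsets (blocks) of $\mathbb Z_v$ such that every 2-element subset of $\mathbb Z_v$ is contained in exactly $\lambda$ blocks (counted with multiplicity), and $\mathcal B$ is invariant under the translation $x\mapsto x+1$. Thus $\mathcal B$ is a union of translation orbits of 3-subsets with multiplicities; a base block is an orbit representative. The fine structure is $(c_1,\ldots,c_\lambda)$, where $c_i$ is the number of distinct base blocks (orbits) occurring with multiplicity exactly $i$. *)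

theory Defs
  imports "HOL-Library.Multiset"
begin

text \<open>Elements of Z_v are represented by naturals in {..<v}; blocks are 3-element
  subsets of {..<v}; a triple system is a multiset of blocks.\<close>

definition shift :: "nat \<Rightarrow> nat \<Rightarrow> nat set \<Rightarrow> nat set" where
  "shift v k b = (\<lambda>x. (x + k) mod v) ` b"

definition is_CTS :: "nat \<Rightarrow> nat \<Rightarrow> nat set multiset \<Rightarrow> bool" where
  "is_CTS v lam B \<longleftrightarrow>
     (\<forall>b \<in># B. b \<subseteq> {..<v} \<and> card b = 3) \<and>
     image_mset (shift v 1) B = B \<and>
     (\<forall>x < v. \<forall>y < v. x \<noteq> y \<longrightarrow> size (filter_mset (\<lambda>b. {x, y} \<subseteq> b) B) = lam)"

definition orbit :: "nat \<Rightarrow> nat set \<Rightarrow> nat set set" where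
  "orbit v b = {shift v k b | k. k < v}"

definition fine_c :: "nat \<Rightarrow> nat set multiset \<Rightarrow> nat \<Rightarrow> nat" where
  "fine_c v B i = card {orbit v b | b. b \<in># B \<and> count B b = i}"

end

theory Submission imports Defs "HOL-Number_Theory.Cong" begin

lemma shift_shift: "shift v a (shift v c b) = shift v (a + c) b"
proof -
  have "(a + (x + c) mod v) mod v = (x + (a + c)) mod v" for x :: nat
    by (metis mod_add_right_eq add.assoc add.commute)
  then show ?thesis unfolding shift_def image_image by (intro image_cong) (auto simp: add.commute)
qed

lemma shift_mod: "shift v (k mod v) b = shift v k b"
  unfolding shift_def by (intro image_cong) (auto simp: mod_add_right_eq)

lemma shift_dvd: assumes "b \<subseteq> {..<v}" "v dvd k" shows "shift v k b = b"
proof -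
  have "(x + k) mod v = x" if "x \<in> b" for x using assms that
    by (metis dvd_imp_mod_0 lessThan_iff mod_add_right_eq mod_less subsetD add_0_right)
  then show ?thesis unfolding shift_def by (simp add: image_cong)
qed

lemma shift_sub: "0 < v \<Longrightarrow> shift v k b \<subseteq> {..<v}"
  unfolding shift_def by auto

lemma inj_add_mod: fixes v k :: nat assumes "b \<subseteq> {..<v}" shows "inj_on (\<lambda>x. (x + k) mod v) b"
proof
  fix x y assume "x \<in> b" "y \<in> b" "(x + k) mod v = (y + k) mod v"
  then have "[x + k = y + k] (mod v)" by (simp add: cong_def)
  then have "[x = y] (mod v)" by (simp add: cong_add_rcancel_nat)
  moreover have "x < v" "y < v" using assms \<open>x \<in> b\<close> \<open>y \<in> b\<close> by auto
  ultimately show "x = y" by (rule cong_less_modulus_unique_nat)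
qed

lemma shift_card: assumes "b \<subseteq> {..<v}" shows "card (shift v k b) = card b"
  using inj_add_mod[OF assms] unfolding shift_def by (simp add: card_image)

lemma shift_fixed:
  assumes "b \<subseteq> {..<v}" "coprime v 3" "card b = 3" "shift v d b = b"
  shows "v dvd d"
proof -
  have inj: "inj_on (\<lambda>x. (x + d) mod v) b" by (rule inj_add_mod[OF assms(1)])
  have "sum id b = sum id (shift v d b)" using assms by simp
  also have "\<dots> = (\<Sum>x\<in>b. (x + d) mod v)" unfolding shift_def using inj by (simp add: sum.reindex)
  finally have "sum id b mod v = (\<Sum>x\<in>b. (x + d) mod v) mod v" by simp
  also have "\<dots> = (\<Sum>x\<in>b. (x + d)) mod v" by (simp add: mod_sum_eq)
  also have "(\<Sum>x\<in>b. (x + d)) = sum id b + 3 * d" using assms(3) by (simp add: sum.distrib)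
  finally have "[sum id b + 3 * d = sum id b] (mod v)" by (simp add: cong_def)
  then have "[3 * d = 0] (mod v)" by (simp add: cong_add_lcancel_0_nat)
  then have "v dvd 3 * d" by (simp add: cong_0_iff)
  then show ?thesis using assms(2) by (simp add: coprime_dvd_mult_right_iff)
qed
lemma orbit_self: "0 < v \<Longrightarrow> b \<subseteq> {..<v} \<Longrightarrow> b \<in> orbit v b"
  unfolding orbit_def using shift_dvd[of b v 0] by force

lemma orbit_mem:
  assumes "c \<in> orbit v b" "b \<subseteq> {..<v}" "0 < v"
  shows "orbit v c = orbit v b"
proof -
  obtain k where k: "k < v" "c = shift v k b" using assms(1) unfolding orbit_def by auto
  show ?thesis
  proof
    show "orbit v c \<subseteq> orbit v b"
    proof
      fix e assume "e \<in> orbit v c"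
      then obtain j where "e = shift v j c" by (auto simp: orbit_def)
      then have "e = shift v ((j + k) mod v) b" using k by (simp add: shift_shift shift_mod)
      then show "e \<in> orbit v b" unfolding orbit_def using assms(3) by auto
    qed
  next
    show "orbit v b \<subseteq> orbit v c"
    proof
      fix e assume "e \<in> orbit v b"
      then obtain j where j: "e = shift v j b" by (auto simp: orbit_def)
      define m where "m = (j + (v - k)) mod v"
      have "shift v m c = shift v (j + (v - k) + k) b" unfolding m_def k
        by (metis shift_shift shift_mod mod_add_left_eq)
      also have "j + (v - k) + k = j + v" using k by simp
      also have "shift v (j + v) b = e" using j shift_mod[of v "j+v" b] shift_mod[of v j b] by simp
      finally show "e \<in> orbit v c" unfolding orbit_def m_def using assms(3) by auto
    qed
  qed
qed

lemma orbit_zero: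
  assumes "b \<subseteq> {..<v}" "0 < v" "coprime v 3" "card b = 3"
  shows "card {c \<in> orbit v b. 0 \<in> c} = 3"
proof -
  define f where "f x = shift v ((v - x) mod v) b" for x
  have eq: "{c \<in> orbit v b. 0 \<in> c} = f ` b"
  proof
    show "{c \<in> orbit v b. 0 \<in> c} \<subseteq> f ` b"
    proof
      fix c assume "c \<in> {c \<in> orbit v b. 0 \<in> c}"
      then obtain k where k: "k < v" "c = shift v k b" "0 \<in> c" unfolding orbit_def by auto
      then obtain x where x: "x \<in> b" "(x + k) mod v = 0" unfolding shift_def by auto
      have "x < v" using x assms by auto
      have "k = (v - x) mod v"
      proof (cases "x = 0")
        case True then show ?thesis using x k by simp
      next
        case False
        have "x + k < 2 * v" using \<open>x < v\<close> k by simp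
        moreover have "x + k > 0" using False by simp
        ultimately have "x + k = v" using x(2)
        proof (cases "x + k < v")
          case True then show ?thesis using x(2) \<open>x + k > 0\<close> by simp
        next
          case False
          then have "(x + k) mod v = x + k - v" using \<open>x + k < 2 * v\<close> by (simp add: le_mod_geq)
          then show ?thesis using x(2) False by simp
        qed
        then show ?thesis using k False by simp
      qed
      then show "c \<in> f ` b" using x k unfolding f_def by auto
    qed
  next
    show "f ` b \<subseteq> {c \<in> orbit v b. 0 \<in> c}"
    proof
      fix c assume "c \<in> f ` b"
      then obtain x where x: "x \<in> b" "c = f x" by auto
      have "x < v" using x assms by auto
      have "(x + (v - x) mod v) mod v = 0"
        by (metis \<open>x < v\<close> add_diff_inverse_nat mod_add_right_eq mod_self not_less_iff_gr_or_eq order.asym)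
      then have "0 \<in> c" using x unfolding f_def shift_def by force
      moreover have "c \<in> orbit v b" using x assms(2) unfolding f_def orbit_def by auto
      ultimately show "c \<in> {c \<in> orbit v b. 0 \<in> c}" by simp
    qed
  qed
  have "inj_on f b"
  proof
    fix x y assume xy: "x \<in> b" "y \<in> b" "f x = f y"
    have xv: "x < v" "y < v" using xy assms by auto
    have "shift v (y + (v - x)) b = shift v (y + (v - y)) b"
      using xy(3) unfolding f_def by (metis shift_shift shift_mod)
    also have "\<dots> = b" using xv assms(1) by (intro shift_dvd) auto
    finally have "v dvd (y + (v - x))" using shift_fixed assms by blast
    then obtain q where q: "y + (v - x) = v * q" by (auto elim: dvdE)
    show "x = y"
    proof (cases q)
      case 0 then show ?thesis using q xv by simp
    next
      case (Suc q')
      show ?thesis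
      proof (cases q')
        case 0 then show ?thesis using q xv Suc by simp
      next
        case (Suc q'')
        then have "v * q \<ge> 2 * v" using \<open>q = Suc q'\<close> by simp
        then have "y + (v - x) \<ge> 2 * v" using q by simp
        then show ?thesis using xv by simp
      qed
    qed
  qed
  then show ?thesis using eq assms(4) by (simp add: card_image)
qed
lemma size_sum_count: "size M = (\<Sum>x\<in>set_mset M. count M x)"
proof (induction M)
  case empty then show ?case by simp
next
  case (add x M)
  show ?case
  proof (cases "x \<in># M")
    case True
    then have e: "set_mset (add_mset x M) = set_mset M" by auto
    have "(\<Sum>y\<in>set_mset M. count (add_mset x M) y) = (\<Sum>y\<in>set_mset M. count M y + (if y = x then 1 else 0))"
      by (intro sum.cong) auto
    also have "\<dots> = size M + 1" using True add by (simp add: sum.distrib)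
    finally show ?thesis using e by simp
  next
    case False
    then have "(\<Sum>y\<in>set_mset M. count (add_mset x M) y) = (\<Sum>y\<in>set_mset M. count M y)"
      by (intro sum.cong) auto
    then show ?thesis using add False by (simp add: count_eq_zero_iff)
  qed
qed

lemma count_le_size': "count M b \<le> size M"
proof (cases "b \<in># M")
  case True
  then show ?thesis unfolding size_sum_count[of M] by (intro member_le_sum) auto
next
  case False
  then have "count M b = 0" by (simp add: count_eq_zero_iff)
  then show ?thesis by simp
qed

lemma size_filter_sum: "size (filter_mset P M) = (\<Sum>x\<in>{x \<in> set_mset M. P x}. count M x)"
  using size_sum_count[of "filter_mset P M"] by simp

lemma shift1_inj:
  assumes "b \<subseteq> {..<v}" "c \<subseteq> {..<v}" "shift v 1 b = shift v 1 c"
  shows "b = c"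
proof (cases "v = 0")
  case True then show ?thesis using assms by auto
next
  case False
  have "shift v (v - 1 + 1) b = shift v (v - 1) (shift v 1 b)" by (simp add: shift_shift)
  also have "\<dots> = shift v (v - 1 + 1) c" using assms(3) by (simp add: shift_shift)
  finally have "shift v (v - 1 + 1) b = shift v (v - 1 + 1) c" .
  moreover have "v dvd (v - 1 + 1)" using False by simp
  ultimately show ?thesis using shift_dvd[OF assms(1)] shift_dvd[OF assms(2)] by simp
qed

lemma count_shift1:
  assumes "is_CTS v lam B" "c \<in># B"
  shows "count B (shift v 1 c) = count B c"
proof -
  have sub: "\<And>b. b \<in># B \<Longrightarrow> b \<subseteq> {..<v}" using assms(1) unfolding is_CTS_def by auto
  have img: "image_mset (shift v 1) B = B" using assms(1) unfolding is_CTS_def by auto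
  have "shift v 1 -` {shift v 1 c} \<inter> set_mset B = {c}"
  proof
    show "shift v 1 -` {shift v 1 c} \<inter> set_mset B \<subseteq> {c}"
    proof
      fix d assume "d \<in> shift v 1 -` {shift v 1 c} \<inter> set_mset B"
      then have "d \<in># B" "shift v 1 d = shift v 1 c" by auto
      then show "d \<in> {c}" using shift1_inj[of d v c] sub assms(2) by simp
    qed
  qed (use assms(2) in auto)
  then have "count (image_mset (shift v 1) B) (shift v 1 c) = count B c"
    by (simp add: count_image_mset)
  then show ?thesis using img by simp
qed

lemma count_shift:
  assumes "is_CTS v lam B" "c \<in># B"
  shows "count B (shift v k c) = count B c"
proof (induction k)
  case 0
  have "c \<subseteq> {..<v}" using assms unfolding is_CTS_def by auto
  then show ?case using shift_dvd[of c v 0] by simp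
next
  case (Suc k)
  have "shift v k c \<in># B" using Suc assms(2) by (metis count_eq_zero_iff)
  then have "count B (shift v 1 (shift v k c)) = count B (shift v k c)"
    using count_shift1 assms(1) by blast
  then show ?case using Suc by (simp add: shift_shift)
qed

lemma count_le4:
  assumes "is_CTS v 4 B" "b \<in># B"
  shows "count B b \<le> 4"
proof -
  have "b \<subseteq> {..<v}" "card b = 3" using assms unfolding is_CTS_def by auto
  then obtain x y where xy: "x \<in> b" "y \<in> b" "x \<noteq> y"
    by (auto simp: card_3_iff)
  have "x < v" "y < v" using xy \<open>b \<subseteq> {..<v}\<close> by auto
  moreover have "\<forall>x<v. \<forall>y<v. x \<noteq> y \<longrightarrow> size (filter_mset (\<lambda>c. {x, y} \<subseteq> c) B) = 4"
    using assms(1) unfolding is_CTS_def by blast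
  ultimately have sz: "size (filter_mset (\<lambda>c. {x, y} \<subseteq> c) B) = 4" using xy by blast
  have "count B b = count (filter_mset (\<lambda>c. {x, y} \<subseteq> c) B) b" using xy by simp
  also have "\<dots> \<le> size (filter_mset (\<lambda>c. {x, y} \<subseteq> c) B)"
    by (rule count_le_size')
  finally show ?thesis using sz by simp
qed

definition gg :: "nat \<Rightarrow> nat" where
  "gg n = (if n = 2 then 1 else 0) + (if n = 3 then 2 else 0) + (if n = 4 then 2 else 0)"

lemma comb:
  fixes c :: "'a \<Rightarrow> nat"
  assumes "finite W" "sum c W = 4"
  shows "(\<Sum>b\<in>W. gg (c b)) \<le> 2"
proof (cases "\<exists>b0\<in>W. c b0 \<ge> 3")
  case True
  then obtain b0 where b0: "b0 \<in> W" "c b0 \<ge> 3" by auto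
  have s: "sum c W = c b0 + sum c (W - {b0})" using assms(1) b0(1) by (simp add: sum.remove)
  have "gg (c b) = 0" if "b \<in> W - {b0}" for b
  proof -
    have "c b \<le> sum c (W - {b0})" using that assms(1) by (intro member_le_sum) auto
    then have "c b \<le> 1" using s b0 assms(2) by simp
    then show ?thesis unfolding gg_def by auto
  qed
  then have "(\<Sum>b\<in>W - {b0}. gg (c b)) = 0" by simp
  moreover have "(\<Sum>b\<in>W. gg (c b)) = gg (c b0) + (\<Sum>b\<in>W - {b0}. gg (c b))"
    using assms(1) b0(1) by (simp add: sum.remove)
  moreover have "gg (c b0) \<le> 2" unfolding gg_def by auto
  ultimately show ?thesis by simp
next
  case False
  then have "2 * gg (c b) \<le> c b" if "b \<in> W" for b using that unfolding gg_def by fastforce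
  then have "(\<Sum>b\<in>W. 2 * gg (c b)) \<le> sum c W" by (intro sum_mono) auto
  then show ?thesis using assms(2) by (simp add: sum_distrib_left[symmetric])
qed
lemma card_Z:
  assumes CTS: "is_CTS v lam B" and v: "0 < v" and cop: "coprime v 3" and i: "0 < i"
  shows "card {b \<in> set_mset B. 0 \<in> b \<and> count B b = i} = 3 * fine_c v B i"
proof -
  have sub: "\<And>b. b \<in># B \<Longrightarrow> b \<subseteq> {..<v} \<and> card b = 3" using CTS unfolding is_CTS_def by auto
  define Orb where "Orb = {orbit v b | b. b \<in># B \<and> count B b = i}"
  define A where "A X = {c \<in> X. 0 \<in> c}" for X :: "nat set set"
  have OI: "Orb = orbit v ` {b \<in> set_mset B. count B b = i}" unfolding Orb_def by auto
  have finO: "finite Orb" unfolding OI by simp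
  have finA: "finite (A X)" if XO: "X \<in> Orb" for X
  proof -
    obtain b where "X = orbit v b" using XO unfolding Orb_def by auto
    moreover have "orbit v b = (\<lambda>k. shift v k b) ` {..<v}" unfolding orbit_def by auto
    ultimately show ?thesis unfolding A_def by simp
  qed
  have disj: "A X \<inter> A Y = {}" if XY: "X \<in> Orb" "Y \<in> Orb" "X \<noteq> Y" for X Y
  proof (rule ccontr)
    assume "A X \<inter> A Y \<noteq> {}"
    then obtain c where c: "c \<in> X" "c \<in> Y" unfolding A_def by auto
    obtain b1 where b1: "X = orbit v b1" "b1 \<in># B" using XY unfolding Orb_def by auto
    obtain b2 where b2: "Y = orbit v b2" "b2 \<in># B" using XY unfolding Orb_def by auto
    have "orbit v c = X" using orbit_mem[of c v b1] c b1 sub v by auto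
    moreover have "orbit v c = Y" using orbit_mem[of c v b2] c b2 sub v by auto
    ultimately show False using XY by simp
  qed
  have eqU: "{b \<in> set_mset B. 0 \<in> b \<and> count B b = i} = \<Union> (A ` Orb)"
  proof
    show "{b \<in> set_mset B. 0 \<in> b \<and> count B b = i} \<subseteq> \<Union> (A ` Orb)"
    proof
      fix b assume b: "b \<in> {b \<in> set_mset B. 0 \<in> b \<and> count B b = i}"
      then have "b \<in> orbit v b" using orbit_self[of v b] sub v by auto
      moreover have "orbit v b \<in> Orb" using b unfolding Orb_def by auto
      ultimately show "b \<in> \<Union> (A ` Orb)" using b unfolding A_def by auto
    qed
  next
    show "\<Union> (A ` Orb) \<subseteq> {b \<in> set_mset B. 0 \<in> b \<and> count B b = i}"
    proof
      fix c assume "c \<in> \<Union> (A ` Orb)"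
      then obtain b k where bk: "b \<in># B" "count B b = i" "c = shift v k b" "0 \<in> c"
        unfolding A_def Orb_def orbit_def by auto
      have "count B c = i" using count_shift[OF CTS bk(1)] bk by simp
      then have "c \<in># B" using i by (metis count_eq_zero_iff not_gr0)
      then show "c \<in> {b \<in> set_mset B. 0 \<in> b \<and> count B b = i}" using bk \<open>count B c = i\<close> by simp
    qed
  qed
  have "card (\<Union> (A ` Orb)) = (\<Sum>X\<in>Orb. card (A X))"
    using finO finA disj by (intro card_UN_disjoint) auto
  also have "\<dots> = (\<Sum>X\<in>Orb. 3)"
  proof (intro sum.cong refl)
    fix X assume "X \<in> Orb"
    then obtain b where "X = orbit v b" "b \<in># B" unfolding Orb_def by auto
    then show "card (A X) = 3" unfolding A_def using orbit_zero[of b v] sub v cop by auto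
  qed
  also have "\<dots> = 3 * card Orb" by simp
  finally show ?thesis using eqU unfolding fine_c_def Orb_def by simp
qed

lemma sum_ind: "finite A \<Longrightarrow> (\<Sum>b\<in>A. if P b then (k::nat) else 0) = k * card {b \<in> A. P b}"
  by (simp add: sum.inter_filter[symmetric])
theorem mainTheorem12:
  fixes v n t s u :: nat and B :: "nat set multiset"
  assumes "v mod 24 = 1 \<or> v mod 24 = 7"
    and "n = (v - 1) div 6"
    and "is_CTS v 4 B"
    and "fine_c v B 2 = t" and "fine_c v B 3 = s" and "fine_c v B 4 = u"
  shows "0 \<le> u \<and> u \<le> n \<and>
         0 \<le> s \<and> int s \<le> int n - int u \<and>
         0 \<le> t \<and> int t \<le> 2 * int n - 2 * int u - 2 * int s"
proof -
  note CTS = assms(3)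
  have v: "0 < v" using assms(1) by (cases v) auto
  have v3: "v mod 3 = 1" using assms(1) by presburger
  have "coprime (v mod 3) (3::nat)" using v3 by simp
  then have cop: "coprime v 3" using coprime_mod_left_iff[of 3 v] by simp
  have "(v - 1) mod 6 = 0" using assms(1) by presburger
  then have vn: "v - 1 = 6 * n" using assms(2) by (metis mod_div_mult_eq add_0 mult.commute)
  have sub: "\<And>b. b \<in># B \<Longrightarrow> b \<subseteq> {..<v} \<and> card b = 3" using CTS unfolding is_CTS_def by auto
  have pairs: "\<forall>x<v. \<forall>y<v. x \<noteq> y \<longrightarrow> size (filter_mset (\<lambda>c. {x, y} \<subseteq> c) B) = 4"
    using CTS unfolding is_CTS_def by blast
  define Z where "Z = {b \<in> set_mset B. 0 \<in> b}"
  define Y where "Y = {1..<v}"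
  define h where "h b = gg (count B b)" for b
  have finZ: "finite Z" unfolding Z_def by simp
  have finY: "finite Y" unfolding Y_def by simp
  have per: "(\<Sum>b\<in>{b \<in> Z. y \<in> b}. h b) \<le> 2" if "y \<in> Y" for y
  proof -
    have "0 < y" "y < v" using that unfolding Y_def by auto
    then have "size (filter_mset (\<lambda>c. {0, y} \<subseteq> c) B) = 4" using pairs v by auto
    moreover have "{b \<in> Z. y \<in> b} = {b \<in> set_mset B. {0, y} \<subseteq> b}" unfolding Z_def by auto
    ultimately have "(\<Sum>b\<in>{b \<in> Z. y \<in> b}. count B b) = 4" by (simp add: size_filter_sum)
    then show ?thesis unfolding h_def using finZ by (intro comb) auto
  qed
  have "(\<Sum>y\<in>Y. \<Sum>b\<in>{b \<in> Z. y \<in> b}. h b) = (\<Sum>b\<in>Z. \<Sum>y\<in>{y \<in> Y. y \<in> b}. h b)"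
    using sum.swap_restrict[OF finZ finY, of "\<lambda>b y. h b" "\<lambda>b y. y \<in> b"] by simp
  also have "\<dots> = (\<Sum>b\<in>Z. 2 * h b)"
  proof (intro sum.cong refl)
    fix b assume "b \<in> Z"
    then have b: "b \<subseteq> {..<v}" "card b = 3" "0 \<in> b" using sub unfolding Z_def by auto
    have "{y \<in> Y. y \<in> b} = b - {0}" using b unfolding Y_def by auto
    then have "card {y \<in> Y. y \<in> b} = 2" using b by simp
    then show "(\<Sum>y\<in>{y \<in> Y. y \<in> b}. h b) = 2 * h b" by simp
  qed
  finally have eq2: "(\<Sum>y\<in>Y. \<Sum>b\<in>{b \<in> Z. y \<in> b}. h b) = (\<Sum>b\<in>Z. 2 * h b)" .
  have "(\<Sum>y\<in>Y. \<Sum>b\<in>{b \<in> Z. y \<in> b}. h b) \<le> (\<Sum>y\<in>Y. 2)"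
    by (intro sum_mono per)
  then have "(\<Sum>b\<in>Z. 2 * h b) \<le> (\<Sum>y\<in>Y. 2)" using eq2 by simp
  then have le: "(\<Sum>b\<in>Z. h b) \<le> v - 1" unfolding Y_def by (simp add: sum_distrib_left[symmetric])
  have "(\<Sum>b\<in>Z. h b) = (\<Sum>b\<in>Z. if count B b = 2 then 1 else 0) + (\<Sum>b\<in>Z. if count B b = 3 then 2 else 0)
      + (\<Sum>b\<in>Z. if count B b = 4 then 2 else 0)"
    unfolding h_def gg_def by (simp add: sum.distrib)
  also have "\<dots> = card {b \<in> Z. count B b = 2} + 2 * card {b \<in> Z. count B b = 3} + 2 * card {b \<in> Z. count B b = 4}"
    using finZ by (simp add: sum_ind)
  finally have hs: "(\<Sum>b\<in>Z. h b) = card {b \<in> Z. count B b = 2} + 2 * card {b \<in> Z. count B b = 3} + 2 * card {b \<in> Z. count B b = 4}" .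
  have ZE: "\<And>i. {b \<in> Z. count B b = i} = {b \<in> set_mset B. 0 \<in> b \<and> count B b = i}"
    unfolding Z_def by auto
  have "(\<Sum>b\<in>Z. h b) = 3 * t + 6 * s + 6 * u"
    unfolding hs ZE using card_Z[OF CTS v cop, of 2] card_Z[OF CTS v cop, of 3] card_Z[OF CTS v cop, of 4] assms(4-6) by simp
  then have "3 * t + 6 * s + 6 * u \<le> 6 * n" using le vn by simp
  then show ?thesis by linarith
qed
end
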